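(* We have $\det(A)\neq0$ if and only if condition (C3) holds and $A\neq0$. If $\det(A)\ne0$ and $\int_{\mathbb{R}^d}|x|^2N(dx)<\infty$, then (C3) holds with $T_3=\infty$.
   Context: $Y$ is a Lévy process in $\mathbb{R}^d$ with generating triplet $(A,N,b)$ ($A$ symmetric non-negative definite $d\times d$ matrix, $b\in\mathbb{R}^d$, $N$ Lévy measure), characteristic exponent $\Psi$ ($\mathbb{E}e^{i\langle x,Y_t\rangle}=e^{-t\Psi(x)}$), $\Psi^*(r)=\sup_{|z|\le r}\mathrm{Re}\,\Psi(z)$. Standing assumption: $h(0^+)=\infty$ where $h(r)=r^{-2}\|A\|+\int(1\wedge|x|^2/r^2)N(dx)$. Condition (C3): there are $T_3\in(0,\infty]$, $c_3\in(0,1]$, $\alpha_3\in(0,2]$ such that $c_3\Psi^*(|x|)\le\mathrm{Re}\Psi(x)$ for all $|x|>1/T_3$, and $\Psi^*(\lambda r)\ge c_3\lambda^{\alpha_3}\Psi^*(r)$ for all $\lambda\ge1$, $r>1/T_3$ (with $1/\infty=0$). *)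

theory Defs
  imports "HOL-Analysis.Analysis"
begin

text \<open>Generating triplet (A,N,b) of a Levy process in R^d, with R^d rendered as real^'n.\<close>

definition sym_nonneg_matrix :: "real^'n^'n \<Rightarrow> bool" where
  "sym_nonneg_matrix A \<longleftrightarrow> transpose A = A \<and> (\<forall>x. 0 \<le> x \<bullet> (A *v x))"

definition levy_measure :: "(real^'n) measure \<Rightarrow> bool" where
  "levy_measure N \<longleftrightarrow> sets N = sets borel \<and> emeasure N {0} = 0 \<and>
     (\<integral>\<^sup>+ y. ennreal (min 1 (norm y ^ 2)) \<partial>N) < \<infinity>"

text \<open>Characteristic exponent given by the Levy-Khintchine formula:
  E exp(i<x,Y_t>) = exp(-t Psi(x)).\<close>
definition char_exp :: "real^'n^'n \<Rightarrow> (real^'n) measure \<Rightarrow> real^'n \<Rightarrow> real^'n \<Rightarrow> complex" where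
  "char_exp A N b x =
     complex_of_real (x \<bullet> (A *v x) / 2) - \<i> * complex_of_real (b \<bullet> x)
     + integral\<^sup>L N (\<lambda>y. 1 - cis (x \<bullet> y)
                         + \<i> * complex_of_real (x \<bullet> y) * indicator (cball 0 1) y)"

definition Psi_star :: "real^'n^'n \<Rightarrow> (real^'n) measure \<Rightarrow> real^'n \<Rightarrow> real \<Rightarrow> real" where
  "Psi_star A N b r = Sup ((\<lambda>z. Re (char_exp A N b z)) ` cball 0 r)"

definition levy_h :: "real^'n^'n \<Rightarrow> (real^'n) measure \<Rightarrow> real \<Rightarrow> real" where
  "levy_h A N r = onorm (\<lambda>x. A *v x) / r\<^sup>2 + integral\<^sup>L N (\<lambda>y. min 1 (norm y ^ 2 / r\<^sup>2))"

definition inv_T :: "ereal \<Rightarrow> real" where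
  "inv_T T = (if T = \<infinity> then 0 else 1 / real_of_ereal T)"

definition C3_with :: "real^'n^'n \<Rightarrow> (real^'n) measure \<Rightarrow> real^'n \<Rightarrow> ereal \<Rightarrow> real \<Rightarrow> real \<Rightarrow> bool" where
  "C3_with A N b T3 c3 \<alpha>3 \<longleftrightarrow>
     0 < T3 \<and> 0 < c3 \<and> c3 \<le> 1 \<and> 0 < \<alpha>3 \<and> \<alpha>3 \<le> 2 \<and>
     (\<forall>x. inv_T T3 < norm x \<longrightarrow> c3 * Psi_star A N b (norm x) \<le> Re (char_exp A N b x)) \<and>
     (\<forall>lam r. 1 \<le> lam \<longrightarrow> inv_T T3 < r \<longrightarrow>
        c3 * lam powr \<alpha>3 * Psi_star A N b r \<le> Psi_star A N b (lam * r))"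

definition C3 :: "real^'n^'n \<Rightarrow> (real^'n) measure \<Rightarrow> real^'n \<Rightarrow> bool" where
  "C3 A N b \<longleftrightarrow> (\<exists>T3 c3 \<alpha>3. C3_with A N b T3 c3 \<alpha>3)"

end

theory Submission
  imports Defs "HOL-Real_Asymp.Real_Asymp"
begin

lemma one_minus_cos_le: "1 - cos (s::real) \<le> 2 * min 1 (s^2)"
proof -
  have c: "cos s = 1 - 2 * (sin (s/2))^2"
    using cos_double_sin[of "s/2"] by simp
  have "\<bar>sin (s/2)\<bar> \<le> \<bar>s/2\<bar>" by (rule abs_sin_x_le_abs_x)
  hence "(sin (s/2))^2 \<le> (s/2)^2"
    by (metis abs_le_square_iff)
  hence "1 - cos s \<le> s^2/2" using c by (simp add: power_divide)
  moreover have "1 - cos s \<le> 2" using cos_ge_minus_one[of s] by linarith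
  moreover have "0 \<le> s^2" by simp
  ultimately show ?thesis
  proof (cases "1 \<le> s^2")
    case True thus ?thesis using \<open>1 - cos s \<le> 2\<close> by (simp add: min_def)
  next
    case False
    hence "min 1 (s^2) = s^2" by (simp add: min_def)
    thus ?thesis using \<open>1 - cos s \<le> s^2/2\<close> \<open>0 \<le> s^2\<close> by linarith
  qed
qed

lemma levy_meas_cong:
  assumes "levy_measure N" 
  shows "(g \<in> borel_measurable N) = (g \<in> borel_measurable borel)"
proof -
  have "sets N = sets borel" using assms unfolding levy_measure_def by simp
  show ?thesis by (rule arg_cong[where f="\<lambda>M. g \<in> M"], rule measurable_cong_sets) (simp_all add: \<open>sets N = sets borel\<close>)
qed

lemma levy_w_integrable:
  fixes N :: "(real^'n) measure"
  assumes "levy_measure N"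
  shows "integrable N (\<lambda>y. min 1 (norm y ^ 2))"
proof (rule integrableI_nonneg)
  show "(\<lambda>y. min 1 (norm y ^ 2)) \<in> borel_measurable N"
    unfolding levy_meas_cong[OF assms] by measurable
  show "AE x in N. 0 \<le> min 1 (norm x ^ 2)" by simp
  show "(\<integral>\<^sup>+ y. ennreal (min 1 (norm y ^ 2)) \<partial>N) < \<infinity>"
    using assms unfolding levy_measure_def by simp
qed

lemma levy_g_integrable:
  fixes N :: "(real^'n) measure"
  assumes "levy_measure N"
  shows "integrable N (\<lambda>y. 2 * min 1 ((r * norm y) ^ 2))"
proof (rule Bochner_Integration.integrable_bound)
  show "integrable N (\<lambda>y. 2 * max 1 (r^2) * min 1 (norm y ^ 2))"
    using levy_w_integrable[OF assms] by simp
  show "(\<lambda>y. 2 * min 1 ((r * norm y) ^ 2)) \<in> borel_measurable N"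
    unfolding levy_meas_cong[OF assms] by measurable
  show "AE y in N. norm (2 * min 1 ((r * norm y) ^ 2)) \<le> norm (2 * max 1 (r^2) * min 1 (norm y ^ 2))"
  proof (rule AE_I2)
    fix y :: "real^'n"
    have "min 1 ((r * norm y) ^ 2) \<le> max 1 (r^2) * min 1 (norm y ^ 2)"
    proof (cases "norm y ^ 2 \<le> 1")
      case True
      have "(r * norm y)^2 = r^2 * norm y^2" by (simp add: power_mult_distrib)
      also have "\<dots> \<le> max 1 (r^2) * norm y^2" by (intro mult_right_mono) auto
      finally show ?thesis using True by (auto simp: min_def)
    next
      case False
      thus ?thesis by (auto simp: min_def max_def)
    qed
    thus "norm (2 * min 1 ((r * norm y) ^ 2)) \<le> norm (2 * max 1 (r^2) * min 1 (norm y ^ 2))"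
      by simp
  qed
qed

definition jf :: "real^'n \<Rightarrow> real^'n \<Rightarrow> complex" where
  "jf z y = 1 - cis (z \<bullet> y) + \<i> * complex_of_real (z \<bullet> y) * indicator (cball 0 1) y"

lemma Re_jf: "Re (jf z y) = 1 - cos (z \<bullet> y)"
  by (simp add: jf_def indicator_def)

lemma Re_char_exp: "Re (char_exp A N b z) = z \<bullet> (A *v z) / 2 + Re (integral\<^sup>L N (jf z))"
  by (simp add: char_exp_def jf_def[abs_def])

lemma jump_nonneg: "0 \<le> Re (integral\<^sup>L N (jf z))"
proof (cases "integrable N (jf z)")
  case True
  hence "Re (integral\<^sup>L N (jf z)) = integral\<^sup>L N (\<lambda>y. Re (jf z y))" by simp
  also have "\<dots> \<ge> 0" by (intro integral_nonneg_AE) (simp add: Re_jf)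
  finally show ?thesis .
qed (simp add: not_integrable_integral_eq)

lemma jump_le:
  fixes N :: "(real^'n) measure"
  assumes "levy_measure N"
  shows "Re (integral\<^sup>L N (jf z)) \<le> integral\<^sup>L N (\<lambda>y. 2 * min 1 ((norm z * norm y) ^ 2))"
proof (cases "integrable N (jf z)")
  case True
  hence "Re (integral\<^sup>L N (jf z)) = integral\<^sup>L N (\<lambda>y. Re (jf z y))" by simp
  also have "\<dots> \<le> integral\<^sup>L N (\<lambda>y. 2 * min 1 ((norm z * norm y) ^ 2))"
  proof (rule integral_mono)
    show "integrable N (\<lambda>y. Re (jf z y))" using True by simp
    show "integrable N (\<lambda>y. 2 * min 1 ((norm z * norm y) ^ 2))"
      by (rule levy_g_integrable[OF assms])
    fix y
    have "(z \<bullet> y)^2 \<le> (norm z * norm y)^2"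
      using power_mono[OF Cauchy_Schwarz_ineq2[of z y] abs_ge_zero, of 2] by simp
    hence "min 1 ((z \<bullet> y)^2) \<le> min 1 ((norm z * norm y) ^ 2)" by simp
    thus "Re (jf z y) \<le> 2 * min 1 ((norm z * norm y) ^ 2)"
      using one_minus_cos_le[of "z \<bullet> y"] by (simp add: Re_jf)
  qed
  finally show ?thesis .
next
  case False
  thus ?thesis by (simp add: not_integrable_integral_eq integral_nonneg_AE)
qed

lemma mv_add: "A *v (x + y) = A *v x + A *v (y::real^'n)"
  by (simp add: matrix_vector_right_distrib)
lemma mv_diff: "A *v (x - y) = A *v x - A *v (y::real^'n)"
  by (simp add: matrix_vector_mult_diff_distrib)
lemma mv_scale: "A *v (c *\<^sub>R x) = c *\<^sub>R (A *v (x::real^'n))"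
  using linear_scale[OF matrix_vector_mul_linear[of A], of c x] by simp

lemma Q_scale: "(c *\<^sub>R x) \<bullet> (A *v (c *\<^sub>R x)) = c^2 * (x \<bullet> (A *v (x::real^'n)))"
  by (simp add: mv_scale power2_eq_square)

lemma sym_inner:
  fixes A :: "real^'n^'n"
  assumes "transpose A = A"
  shows "x \<bullet> (A *v y) = y \<bullet> (A *v x)"
proof -
  have "x \<bullet> (A *v y) = (x v* A) \<bullet> y" by (simp add: dot_lmul_matrix)
  also have "x v* A = A *v x" using vector_transpose_matrix[of x A] assms by simp
  finally show ?thesis by (simp add: inner_commute)
qed

lemma psd_zero:
  fixes A :: "real^'n^'n"
  assumes "sym_nonneg_matrix A" and "u \<bullet> (A *v u) = 0"
  shows "A *v u = 0"
proof (rule ccontr)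
  assume ne: "A *v u \<noteq> 0"
  define w where "w = A *v u"
  define c where "c = w \<bullet> w"
  define d where "d = w \<bullet> (A *v w)"
  have cpos: "c > 0" using ne by (simp add: c_def w_def)
  have dnn: "d \<ge> 0" using assms(1) by (simp add: d_def sym_nonneg_matrix_def)
  have symA: "transpose A = A" using assms(1) by (simp add: sym_nonneg_matrix_def)
  define t where "t = - c / (d + 1)"
  have "0 \<le> (u + t *\<^sub>R w) \<bullet> (A *v (u + t *\<^sub>R w))"
    using assms(1) by (simp add: sym_nonneg_matrix_def)
  also have "\<dots> = u \<bullet> (A *v u) + t * (u \<bullet> (A *v w)) + t * (w \<bullet> (A *v u)) + t^2 * d"
    by (simp add: mv_add mv_scale inner_add_left inner_add_right d_def power2_eq_square algebra_simps)
  also have "u \<bullet> (A *v w) = w \<bullet> (A *v u)" by (rule sym_inner[OF symA])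
  also have "w \<bullet> (A *v u) = c" by (simp add: c_def w_def)
  finally have ineq: "0 \<le> 2 * t * c + t^2 * d" using assms(2) by (simp add: algebra_simps)
  have td: "t * (d + 1) = - c" using dnn by (simp add: t_def)
  have "t^2 * d \<le> t^2 * (d + 1)" by (intro mult_left_mono) auto
  also have "t^2 * (d+1) = - t * c" using td by (simp add: power2_eq_square) (metis mult.assoc mult_minus_right)
  finally have "0 \<le> t * c" using ineq by linarith
  moreover have "t < 0" using cpos dnn by (simp add: t_def)
  ultimately show False using cpos mult_neg_pos[of t c] by linarith
qed

lemma det_ker:
  fixes A :: "real^'n^'n"
  shows "det A \<noteq> 0 \<longleftrightarrow> (\<forall>v. A *v v = 0 \<longrightarrow> v = 0)"
  using det_nz_iff_inj[OF matrix_vector_mul_linear[of A]]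
  by (simp add: vec.inj_iff_eq_0)

lemma Q_le:
  fixes A :: "real^'n^'n"
  shows "z \<bullet> (A *v z) \<le> onorm ((*v) A) * norm z ^ 2"
proof -
  have "z \<bullet> (A *v z) \<le> norm z * norm (A *v z)" by (rule norm_cauchy_schwarz)
  also have "\<dots> \<le> norm z * (onorm ((*v) A) * norm z)"
    by (intro mult_left_mono onorm) auto
  finally show ?thesis by (simp add: power2_eq_square algebra_simps)
qed

lemma coercive:
  fixes A :: "real^'n^'n"
  assumes "sym_nonneg_matrix A" "det A \<noteq> 0"
  obtains m where "m > 0" "\<And>z. m * norm z ^ 2 \<le> z \<bullet> (A *v z)"
proof -
  have cont: "continuous_on (sphere 0 1) (\<lambda>z::real^'n. z \<bullet> (A *v z))"
    by (intro continuous_intros linear_continuous_on matrix_vector_mul_bounded_linear)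
  obtain e :: "real^'n" where e: "e \<in> Basis" using nonempty_Basis by blast
  have "sphere (0::real^'n) 1 \<noteq> {}" using e by (auto intro!: exI[of _ e])
  from continuous_attains_inf[OF compact_sphere this cont]
  obtain x0 where x0: "x0 \<in> sphere 0 1" "\<And>y. y \<in> sphere 0 1 \<Longrightarrow> x0 \<bullet> (A *v x0) \<le> y \<bullet> (A *v y)"
    by blast
  define m where "m = x0 \<bullet> (A *v x0)"
  have "m \<ge> 0" using assms(1) by (simp add: m_def sym_nonneg_matrix_def)
  moreover have "m \<noteq> 0"
  proof
    assume "m = 0"
    hence "A *v x0 = 0" using psd_zero[OF assms(1)] by (simp add: m_def)
    hence "x0 = 0" using assms(2) det_ker by blast
    thus False using x0(1) by simp
  qed
  ultimately have mpos: "m > 0" by simp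
  have "m * norm z ^ 2 \<le> z \<bullet> (A *v z)" for z
  proof (cases "z = 0")
    case True thus ?thesis by simp
  next
    case False
    define u where "u = (1 / norm z) *\<^sub>R z"
    have u: "u \<in> sphere 0 1" using False by (simp add: u_def)
    have zu: "z = norm z *\<^sub>R u" using False by (simp add: u_def)
    have "z \<bullet> (A *v z) = norm z ^ 2 * (u \<bullet> (A *v u))"
      by (subst zu, subst (2) zu, rule Q_scale)
    also have "\<dots> \<ge> norm z ^ 2 * m" using x0(2)[OF u] by (simp add: m_def mult_left_mono)
    finally show ?thesis by (simp add: mult.commute)
  qed
  with mpos that show ?thesis by blast
qed

definition G :: "(real^'n) measure \<Rightarrow> real \<Rightarrow> real" where
  "G N r = integral\<^sup>L N (\<lambda>y. 2 * min 1 ((r * norm y) ^ 2))"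

lemma F_lower:
  assumes "sym_nonneg_matrix A"
  shows "z \<bullet> (A *v z) / 2 \<le> Re (char_exp A N b z)" "0 \<le> z \<bullet> (A *v z)"
  using jump_nonneg[of N z] assms by (auto simp: Re_char_exp sym_nonneg_matrix_def)

lemma F_upper:
  fixes N :: "(real^'n) measure"
  assumes "levy_measure N" "norm z \<le> r"
  shows "Re (char_exp A N b z) \<le> onorm ((*v) A) * r^2 / 2 + G N r"
proof -
  have K: "onorm ((*v) A) \<ge> 0" by (intro onorm_pos_le) auto
  have "z \<bullet> (A *v z) \<le> onorm ((*v) A) * norm z ^ 2" by (rule Q_le)
  also have "\<dots> \<le> onorm ((*v) A) * r ^ 2"
    using assms(2) K by (intro mult_left_mono power_mono) auto
  finally have q: "z \<bullet> (A *v z) \<le> onorm ((*v) A) * r ^ 2" .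
  have "Re (integral\<^sup>L N (jf z)) \<le> integral\<^sup>L N (\<lambda>y. 2 * min 1 ((norm z * norm y) ^ 2))"
    by (rule jump_le[OF assms(1)])
  also have "\<dots> \<le> G N r" unfolding G_def
  proof (rule integral_mono)
    show "integrable N (\<lambda>y. 2 * min 1 ((norm z * norm y) ^ 2))"
      by (rule levy_g_integrable[OF assms(1)])
    show "integrable N (\<lambda>y. 2 * min 1 ((r * norm y) ^ 2))"
      by (rule levy_g_integrable[OF assms(1)])
    fix y :: "real^'n"
    have "norm z * norm y \<le> r * norm y" using assms(2) by (intro mult_right_mono) auto
    hence "(norm z * norm y)^2 \<le> (r * norm y)^2" by (intro power_mono) auto
    thus "2 * min 1 ((norm z * norm y) ^ 2) \<le> 2 * min 1 ((r * norm y) ^ 2)" by simp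
  qed
  finally show ?thesis using q by (simp add: Re_char_exp)
qed

lemma Ps_upper:
  fixes N :: "(real^'n) measure"
  assumes "levy_measure N" "0 \<le> r"
  shows "Psi_star A N b r \<le> onorm ((*v) A) * r^2 / 2 + G N r"
  unfolding Psi_star_def
  using assms by (intro cSup_least) (auto intro: F_upper)

lemma Ps_lower:
  fixes N :: "(real^'n) measure"
  assumes "levy_measure N" "norm z \<le> r"
  shows "Re (char_exp A N b z) \<le> Psi_star A N b r"
  unfolding Psi_star_def
proof (rule cSup_upper)
  show "Re (char_exp A N b z) \<in> (\<lambda>z. Re (char_exp A N b z)) ` cball 0 r" using assms(2) by auto
  show "bdd_above ((\<lambda>z. Re (char_exp A N b z)) ` cball 0 r)"
    by (rule bdd_aboveI[where M="onorm ((*v) A) * r^2 / 2 + G N r"]) (auto intro: F_upper[OF assms(1)])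
qed

lemma G_le1:
  fixes N :: "(real^'n) measure"
  assumes "levy_measure N" "1 \<le> r"
  shows "G N r \<le> 2 * r^2 * integral\<^sup>L N (\<lambda>y. min 1 (norm y ^ 2))"
proof -
  have "G N r \<le> integral\<^sup>L N (\<lambda>y. 2 * r^2 * min 1 (norm y ^ 2))" unfolding G_def
  proof (rule integral_mono)
    show "integrable N (\<lambda>y. 2 * min 1 ((r * norm y) ^ 2))"
      by (rule levy_g_integrable[OF assms(1)])
    show "integrable N (\<lambda>y. 2 * r^2 * min 1 (norm y ^ 2))"
      using levy_w_integrable[OF assms(1)] by simp
    fix y :: "real^'n"
    have r2: "1 \<le> r^2" using assms(2) by (simp add: one_le_power)
    have "min 1 ((r * norm y) ^ 2) \<le> r^2 * min 1 (norm y ^ 2)"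
    proof (cases "norm y ^ 2 \<le> 1")
      case True thus ?thesis by (simp add: power_mult_distrib min_def)
    next
      case False thus ?thesis using r2 by (simp add: min_def)
    qed
    thus "2 * min 1 ((r * norm y) ^ 2) \<le> 2 * r^2 * min 1 (norm y ^ 2)" by simp
  qed
  thus ?thesis by simp
qed

lemma G_le2:
  fixes N :: "(real^'n) measure"
  assumes "levy_measure N" "(\<integral>\<^sup>+ y. ennreal (norm y ^ 2) \<partial>N) < \<infinity>"
  shows "G N r \<le> 2 * r^2 * integral\<^sup>L N (\<lambda>y. norm y ^ 2)"
proof -
  have int2: "integrable N (\<lambda>y. norm y ^ 2)"
  proof (rule integrableI_nonneg)
    show "(\<lambda>y. norm y ^ 2) \<in> borel_measurable N"
      unfolding levy_meas_cong[OF assms(1)] by measurable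
  qed (use assms(2) in auto)
  have "G N r \<le> integral\<^sup>L N (\<lambda>y. 2 * r^2 * norm y ^ 2)" unfolding G_def
  proof (rule integral_mono)
    show "integrable N (\<lambda>y. 2 * min 1 ((r * norm y) ^ 2))"
      by (rule levy_g_integrable[OF assms(1)])
    show "integrable N (\<lambda>y. 2 * r^2 * norm y ^ 2)"
      using int2 by simp
    fix y :: "real^'n"
    show "2 * min 1 ((r * norm y) ^ 2) \<le> 2 * r^2 * norm y ^ 2"
      by (simp add: power_mult_distrib)
  qed
  thus ?thesis by simp
qed

lemma C3_from_bound:
  fixes A :: "real^'n^'n" and N :: "(real^'n) measure"
  assumes psd: "sym_nonneg_matrix A" and det: "det A \<noteq> 0" and lev: "levy_measure N"
    and T: "0 < T" "0 \<le> inv_T T"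
    and bnd: "\<And>r. inv_T T < r \<Longrightarrow> Psi_star A N b r \<le> M * r^2"
  shows "\<exists>c3 \<alpha>3. C3_with A N b T c3 \<alpha>3"
proof -
  obtain m where m: "m > 0" "\<And>z. m * norm z ^ 2 \<le> z \<bullet> (A *v z)"
    using coercive[OF psd det] by blast
  define M' where "M' = max M 1"
  have M'pos: "M' > 0" by (simp add: M'_def)
  have bnd': "Psi_star A N b r \<le> M' * r^2" if "inv_T T < r" for r
  proof -
    have "M * r^2 \<le> M' * r^2" by (intro mult_right_mono) (auto simp: M'_def)
    thus ?thesis using bnd[OF that] by linarith
  qed
  define c3 where "c3 = min 1 (m / (2 * M'))"
  have c3pos: "c3 > 0" using m(1) M'pos by (simp add: c3_def)
  have c3M: "c3 * M' \<le> m / 2"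
  proof -
    have "c3 * M' \<le> m / (2 * M') * M'" using M'pos by (intro mult_right_mono) (auto simp: c3_def)
    also have "\<dots> = m / 2" using M'pos by simp
    finally show ?thesis .
  qed
  have Flow: "m / 2 * norm z ^ 2 \<le> Re (char_exp A N b z)" for z
    using m(2)[of z] F_lower(1)[OF psd, of z N b] by linarith
  obtain e :: "real^'n" where e: "e \<in> Basis" using nonempty_Basis by blast
  have ne: "norm e = 1" using e by simp
  have "C3_with A N b T c3 2"
    unfolding C3_with_def
  proof (intro conjI allI impI)
    show "0 < T" by fact
    show "0 < c3" by fact
    show "c3 \<le> 1" by (simp add: c3_def)
    show "(0::real) < 2" "(2::real) \<le> 2" by auto
  next
    fix x :: "real^'n"
    assume x: "inv_T T < norm x"
    have "c3 * Psi_star A N b (norm x) \<le> c3 * (M' * norm x ^ 2)"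
      using c3pos bnd'[OF x] by (intro mult_left_mono) auto
    also have "\<dots> = (c3 * M') * norm x ^ 2" by simp
    also have "\<dots> \<le> m / 2 * norm x ^ 2" using c3M by (intro mult_right_mono) auto
    also have "\<dots> \<le> Re (char_exp A N b x)" by (rule Flow)
    finally show "c3 * Psi_star A N b (norm x) \<le> Re (char_exp A N b x)" .
  next
    fix lam r :: real
    assume lam: "1 \<le> lam" and r: "inv_T T < r"
    have rpos: "r > 0" using r T(2) by linarith
    have lp: "lam powr 2 = lam^2" using lam by (simp add: powr_numeral)
    have "c3 * lam powr 2 * Psi_star A N b r \<le> c3 * lam^2 * (M' * r^2)"
      unfolding lp using c3pos bnd'[OF r] by (intro mult_left_mono) auto
    also have "\<dots> = (c3 * M') * (lam * r)^2" by (simp add: power_mult_distrib)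
    also have "\<dots> \<le> m / 2 * (lam * r)^2" using c3M by (intro mult_right_mono) auto
    also have "\<dots> = m / 2 * norm ((lam * r) *\<^sub>R e) ^ 2" using ne lam rpos by simp
    also have "\<dots> \<le> Re (char_exp A N b ((lam * r) *\<^sub>R e))" by (rule Flow)
    also have "\<dots> \<le> Psi_star A N b (lam * r)"
      using ne lam rpos by (intro Ps_lower[OF lev]) simp
    finally show "c3 * lam powr 2 * Psi_star A N b r \<le> Psi_star A N b (lam * r)" .
  qed
  thus ?thesis by blast
qed

lemma small_jump_limit:
  fixes N :: "(real^'n) measure"
  assumes lev: "levy_measure N"
  shows "((\<lambda>t. integral\<^sup>L N (\<lambda>y. min (1 / t^2) (norm y ^ 2))) \<longlongrightarrow> 0) at_top"
proof -
  have "((\<lambda>t. integral\<^sup>L N (\<lambda>y. min (1 / t^2) (norm y ^ 2))) \<longlongrightarrow> integral\<^sup>L N (\<lambda>y. 0::real)) at_top"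
  proof (rule integral_dominated_convergence_at_top[where w="\<lambda>y. min 1 (norm y ^ 2)"])
    show "(\<lambda>y. 0::real) \<in> borel_measurable N" by simp
    show "(\<lambda>y. min (1 / t^2) (norm y ^ 2)) \<in> borel_measurable N" for t
      unfolding levy_meas_cong[OF lev] by measurable
    show "integrable N (\<lambda>y. min 1 (norm y ^ 2))" by (rule levy_w_integrable[OF lev])
    show "AE y in N. ((\<lambda>t. min (1 / t^2) (norm y ^ 2)) \<longlongrightarrow> 0) at_top"
    proof (rule AE_I2)
      fix y :: "real^'n"
      have "((\<lambda>t::real. 1 / t^2) \<longlongrightarrow> 0) at_top" by real_asymp
      hence "((\<lambda>t. min (1 / t^2) (norm y ^ 2)) \<longlongrightarrow> min 0 (norm y ^ 2)) at_top"
        by (intro tendsto_min tendsto_const)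
      thus "((\<lambda>t. min (1 / t^2) (norm y ^ 2)) \<longlongrightarrow> 0) at_top" by simp
    qed
    show "\<forall>\<^sub>F t in at_top. AE y in N. norm (min (1 / t^2) (norm y ^ 2)) \<le> min 1 (norm y ^ 2)"
      using eventually_ge_at_top[of "1::real"]
    proof eventually_elim
      case (elim t)
      have "1 / t^2 \<le> 1" using elim by (simp add: one_le_power)
      moreover have "0 \<le> 1 / t^2" by simp
      ultimately show ?case by (intro AE_I2) (auto simp: min_def)
    qed
  qed
  thus ?thesis by simp
qed

lemma C3_det:
  fixes A :: "real^'n^'n" and N :: "(real^'n) measure"
  assumes psd: "sym_nonneg_matrix A" and lev: "levy_measure N"
    and C: "C3_with A N b T c3 \<alpha>3" and A0: "A \<noteq> 0"
  shows "det A \<noteq> 0"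
proof (rule ccontr)
  assume "\<not> det A \<noteq> 0"
  then obtain v0 where v0: "A *v v0 = 0" "v0 \<noteq> 0" using det_ker by blast
  define v where "v = (1 / norm v0) *\<^sub>R v0"
  have v: "A *v v = 0" "norm v = 1" using v0 by (auto simp: v_def mv_scale)
  obtain u0 where u0: "u0 \<bullet> (A *v u0) \<noteq> 0"
  proof (rule ccontr)
    assume "\<not> thesis"
    hence "\<forall>u. u \<bullet> (A *v u) = 0" using that by blast
    hence "\<forall>u. A *v u = 0 *v u" using psd_zero[OF psd] by simp
    hence "A = 0" by (simp add: matrix_eq)
    thus False using A0 by simp
  qed
  have u0ne: "u0 \<noteq> 0" using u0 by auto
  define u where "u = (1 / norm u0) *\<^sub>R u0"
  have nu: "norm u = 1" using u0ne by (simp add: u_def)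
  define a where "a = u \<bullet> (A *v u)"
  have "a = (1 / norm u0)^2 * (u0 \<bullet> (A *v u0))" unfolding a_def u_def by (rule Q_scale)
  moreover have "u0 \<bullet> (A *v u0) > 0" using u0 F_lower(2)[OF psd, of u0] by linarith
  ultimately have apos: "a > 0" using u0ne by simp
  have c3pos: "c3 > 0" using C by (simp add: C3_with_def)
  define R where "R = max (inv_T T) 1"
  have key: "c3 * a / 4 \<le> integral\<^sup>L N (\<lambda>y. min (1 / t^2) (norm y ^ 2))" if t: "t > R" for t
  proof -
    have tpos: "t > 0" "inv_T T < t" using t by (auto simp: R_def)
    have n1: "norm (t *\<^sub>R v) = t" "norm (t *\<^sub>R u) = t" using v nu tpos by auto
    have "t^2 * a / 2 = (t *\<^sub>R u) \<bullet> (A *v (t *\<^sub>R u)) / 2" using Q_scale[of t u A] by (simp add: a_def)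
    also have "\<dots> \<le> Re (char_exp A N b (t *\<^sub>R u))" by (rule F_lower(1)[OF psd])
    also have "\<dots> \<le> Psi_star A N b t" using n1(2) by (intro Ps_lower[OF lev]) simp
    finally have "c3 * (t^2 * a / 2) \<le> c3 * Psi_star A N b t" using c3pos by simp
    also have "\<dots> \<le> Re (char_exp A N b (t *\<^sub>R v))"
      using C tpos(2) n1 unfolding C3_with_def by metis
    also have "\<dots> = Re (integral\<^sup>L N (jf (t *\<^sub>R v)))"
      by (simp add: Re_char_exp mv_scale v)
    also have "\<dots> \<le> integral\<^sup>L N (\<lambda>y. 2 * min 1 ((t * norm y) ^ 2))"
      using jump_le[OF lev, of "t *\<^sub>R v"] n1 by simp
    also have "\<dots> = integral\<^sup>L N (\<lambda>y. 2 * t^2 * min (1 / t^2) (norm y ^ 2))"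
    proof (rule Bochner_Integration.integral_cong)
      fix y :: "real^'n"
      have "t^2 * min (1 / t^2) (norm y ^ 2) = min (t^2 * (1/t^2)) (t^2 * norm y ^ 2)"
        using tpos by (simp add: min_mult_distrib_left)
      also have "\<dots> = min 1 ((t * norm y)^2)" using tpos by (simp add: power_mult_distrib)
      finally show "2 * min 1 ((t * norm y) ^ 2) = 2 * t^2 * min (1 / t^2) (norm y ^ 2)" by simp
    qed simp
    also have "\<dots> = 2 * t^2 * integral\<^sup>L N (\<lambda>y. min (1 / t^2) (norm y ^ 2))" by simp
    finally have "t^2 * (c3 * a / 4) \<le> t^2 * integral\<^sup>L N (\<lambda>y. min (1 / t^2) (norm y ^ 2))"
      by (simp add: algebra_simps)
    thus ?thesis using tpos by simp
  qed
  have "\<forall>\<^sub>F t in at_top. integral\<^sup>L N (\<lambda>y. min (1 / t^2) (norm y ^ 2)) < c3 * a / 4"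
    using order_tendstoD(2)[OF small_jump_limit[OF lev], of "c3 * a / 4"] c3pos apos by simp
  moreover have "\<forall>\<^sub>F t in at_top. t > R" by (rule eventually_gt_at_top)
  ultimately have "\<forall>\<^sub>F t in at_top. integral\<^sup>L N (\<lambda>y. min (1 / t^2) (norm y ^ 2)) < c3 * a / 4 \<and> t > R"
    by (rule eventually_conj)
  then obtain t where "integral\<^sup>L N (\<lambda>y. min (1 / t^2) (norm y ^ 2)) < c3 * a / 4" "t > R"
    unfolding eventually_at_top_linorder by (metis order.refl)
  thus False using key by fastforce
qed

theorem lemma4p1:
  fixes A :: "real^'n^'n" and N :: "(real^'n) measure" and b :: "real^'n"
  assumes "sym_nonneg_matrix A"
    and "levy_measure N"
    and "filterlim (levy_h A N) at_top (at_right 0)"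
  shows "(det A \<noteq> 0 \<longleftrightarrow> C3 A N b \<and> A \<noteq> 0) \<and>
         (det A \<noteq> 0 \<and> (\<integral>\<^sup>+ y. ennreal (norm y ^ 2) \<partial>N) < \<infinity> \<longrightarrow>
           (\<exists>c3 \<alpha>3. C3_with A N b \<infinity> c3 \<alpha>3))"
proof (intro conjI iffI impI)
  assume d: "det A \<noteq> 0"
  define K where "K = onorm ((*v) A)"
  define I where "I = integral\<^sup>L N (\<lambda>y. min 1 (norm y ^ 2))"
  have "\<exists>c3 \<alpha>3. C3_with A N b (ereal 1) c3 \<alpha>3"
  proof (rule C3_from_bound[OF assms(1) d assms(2), where M="K/2 + 2 * I"])
    show "0 < ereal 1" by simp
    show "0 \<le> inv_T (ereal 1)" by (simp add: inv_T_def)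
    fix r assume "inv_T (ereal 1) < r"
    hence r: "1 < r" by (simp add: inv_T_def)
    have "Psi_star A N b r \<le> K * r^2 / 2 + G N r"
      using Ps_upper[OF assms(2), of r] r by (simp add: K_def)
    also have "\<dots> \<le> K * r^2 / 2 + 2 * r^2 * I"
      using G_le1[OF assms(2), of r] r by (simp add: I_def)
    finally show "Psi_star A N b r \<le> (K/2 + 2 * I) * r^2" by (simp add: algebra_simps)
  qed
  thus "C3 A N b" by (auto simp: C3_def)
next
  assume d: "det A \<noteq> 0"
  show "A \<noteq> 0"
    proof
      assume "A = 0"
      obtain e :: "real^'n" where e: "e \<in> Basis" using nonempty_Basis by blast
      hence "e \<noteq> 0" by auto
      moreover have "A *v e = 0" using \<open>A = 0\<close> by simp
      ultimately show False using d det_ker by blast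
    qed
next
  assume "C3 A N b \<and> A \<noteq> 0"
  then obtain T c3 \<alpha>3 where "C3_with A N b T c3 \<alpha>3" "A \<noteq> 0" by (auto simp: C3_def)
  thus "det A \<noteq> 0" using C3_det[OF assms(1,2)] by blast
next
  assume h: "det A \<noteq> 0 \<and> (\<integral>\<^sup>+ y. ennreal (norm y ^ 2) \<partial>N) < \<infinity>"
  define K where "K = onorm ((*v) A)"
  define I where "I = integral\<^sup>L N (\<lambda>y. norm y ^ 2)"
  show "\<exists>c3 \<alpha>3. C3_with A N b \<infinity> c3 \<alpha>3"
  proof (rule C3_from_bound[OF assms(1) _ assms(2), where M="K/2 + 2 * I"])
    show "det A \<noteq> 0" using h by simp
    show "0 < (\<infinity>::ereal)" by simp
    show "0 \<le> inv_T \<infinity>" by (simp add: inv_T_def)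
    fix r assume "inv_T \<infinity> < r"
    hence r: "0 < r" by (simp add: inv_T_def)
    have "Psi_star A N b r \<le> K * r^2 / 2 + G N r"
      using Ps_upper[OF assms(2), of r] r by (simp add: K_def)
    also have "\<dots> \<le> K * r^2 / 2 + 2 * r^2 * I"
      using G_le2[OF assms(2), of r] h by (simp add: I_def)
    finally show "Psi_star A N b r \<le> (K/2 + 2 * I) * r^2" by (simp add: algebra_simps)
  qed
qed

end
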